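(* Let $(Z_i)_{i\ge1}$ be i.i.d. non-constant real random variables. For each $n$ let $(a_{n,i})_{i\ge1}$ be real constants, and for $k\ge1$ let $M_{n,k}$ be the $k$-th largest of $(a_{n,i}+Z_i)_{i\ge1}$. If $M_{n,1}\to0$ in probability as $n\to\infty$, then for each $k\ge1$, $M_{n,k}\to0$ in probability as $n\to\infty$.
   Context: The $k$-th largest value (counted with multiplicity) is $M_{n,k}=\sup\{x\in\mathbb R:\#\{i:a_{n,i}+Z_i\ge x\}\ge k\}\in[-\infty,\infty]$. *)

theory Defs
  imports "HOL-Probability.Probability"
begin

text \<open>k-th largest value (with multiplicity) of the family (a i + z i), i ranging over nat:
  sup {x real. #{i. a i + z i \<ge> x} \<ge> k}, in the extended reals (Sup of empty set = -\<infinity>).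
  "#S \<ge> k" (S possibly infinite) is rendered as: S contains a finite subset of cardinality k.\<close>
definition kth_largest :: "(nat \<Rightarrow> real) \<Rightarrow> (nat \<Rightarrow> real) \<Rightarrow> nat \<Rightarrow> ereal" where
  "kth_largest a z k =
     Sup (ereal ` {x::real. \<exists>F. F \<subseteq> {i. x \<le> a i + z i} \<and> finite F \<and> card F = k})"

end

theory Submission
  imports Defs
begin


lemma kth1: "kth_largest a z (Suc 0) = (SUP i. ereal (a i + z i))"
  unfolding kth_largest_def
proof (rule antisym)
  show "Sup (ereal ` {x. \<exists>F\<subseteq>{i. x \<le> a i + z i}. finite F \<and> card F = Suc 0}) \<le> (SUP i. ereal (a i + z i))"
  proof (rule Sup_least)
    fix y assume "y \<in> ereal ` {x. \<exists>F\<subseteq>{i. x \<le> a i + z i}. finite F \<and> card F = Suc 0}"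
    then obtain x F where y: "y = ereal x" and F: "F \<subseteq> {i. x \<le> a i + z i}" "card F = Suc 0" by auto
    then obtain i where "F = {i}" by (auto simp: card_Suc_eq)
    with F have "x \<le> a i + z i" by auto
    then have "ereal x \<le> ereal (a i + z i)" by simp
    also have "\<dots> \<le> (SUP i. ereal (a i + z i))" by (rule SUP_upper) simp
    finally show "y \<le> (SUP i. ereal (a i + z i))" using y by simp
  qed
  show "(SUP i. ereal (a i + z i)) \<le> Sup (ereal ` {x. \<exists>F\<subseteq>{i. x \<le> a i + z i}. finite F \<and> card F = Suc 0})"
  proof (rule SUP_least)
    fix i
    have "a i + z i \<in> {x. \<exists>F\<subseteq>{i. x \<le> a i + z i}. finite F \<and> card F = Suc 0}"
      by (rule CollectI, rule exI[of _ "{i}"]) auto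
    then show "ereal (a i + z i) \<le> Sup (ereal ` {x. \<exists>F\<subseteq>{i. x \<le> a i + z i}. finite F \<and> card F = Suc 0})"
      by (intro Sup_upper) auto
  qed
qed

lemma kth_mono: assumes "1 \<le> k" shows "kth_largest a z k \<le> kth_largest a z 1"
  unfolding kth_largest_def
proof (rule Sup_subset_mono, rule image_mono, rule subsetI)
  fix x assume "x \<in> {x. \<exists>F\<subseteq>{i. x \<le> a i + z i}. finite F \<and> card F = k}"
  then obtain F where F: "F \<subseteq> {i. x \<le> a i + z i}" "finite F" "card F = k" by auto
  then have "F \<noteq> {}" using assms by auto
  then obtain i where "i \<in> F" by auto
  then show "x \<in> {x. \<exists>F\<subseteq>{i. x \<le> a i + z i}. finite F \<and> card F = 1}"
    using F by (intro CollectI exI[of _ "{i}"]) auto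
qed

lemma kth_ge: assumes "finite F" "card F = k" "\<forall>i\<in>F. x \<le> a i + z i"
  shows "ereal x \<le> kth_largest a z k"
  unfolding kth_largest_def using assms by (intro Sup_upper) auto

lemma blocks:
  fixes c :: "nat \<Rightarrow> real" and \<alpha> r :: real and k :: nat
  assumes c: "\<And>i. \<alpha> \<le> c i \<and> c i \<le> 1" and a: "0 < \<alpha>" "\<alpha> \<le> 1" and r: "0 < r" "r \<le> 1"
    and ex: "\<exists>m. (\<Prod>i<m. c i) < r ^ k"
  shows "\<exists>mm::nat\<Rightarrow>nat. mm 0 = 0 \<and> (\<forall>j<k. mm j \<le> mm (Suc j) \<and> (\<Prod>i\<in>{mm j..<mm (Suc j)}. c i) \<le> r / \<alpha>)"
proof -
  define Q where "Q m = (\<Prod>i<m. c i)" for m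
  have cpos: "0 < c i" for i using c[of i] a by linarith
  have Qpos: "0 < Q m" for m unfolding Q_def using cpos by (simp add: prod_pos)
  obtain m0 where m0: "Q m0 < r ^ k" using ex Q_def by auto
  define mm where "mm j = (LEAST m. Q m \<le> r ^ j)" for j
  have exj: "\<exists>m. Q m \<le> r ^ j" if "j \<le> k" for j
  proof -
    have "r ^ k \<le> r ^ j" using that r by (simp add: power_decreasing)
    then show ?thesis using m0 by (intro exI[of _ m0]) simp
  qed
  have Qmm: "Q (mm j) \<le> r ^ j" if "j \<le> k" for j
    unfolding mm_def by (rule LeastI_ex) (rule exj[OF that])
  have mm0: "mm 0 = 0" unfolding mm_def Q_def by (intro Least_eq_0) simp
  have lower: "\<alpha> * r ^ j \<le> Q (mm j)" for j
  proof (cases "mm j")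
    case 0
    have "\<alpha> * r ^ j \<le> 1" using a r by (simp add: mult_le_one power_le_one)
    then show ?thesis using 0 by (simp add: Q_def)
  next
    case (Suc p)
    have "\<not> Q p \<le> r ^ j" using not_less_Least[of p "\<lambda>m. Q m \<le> r ^ j"] Suc unfolding mm_def by simp
    then have "r ^ j < Q p" by simp
    moreover have "Q (Suc p) = Q p * c p" unfolding Q_def by simp
    ultimately have "r ^ j * \<alpha> \<le> Q (Suc p)" using c[of p] r
      using mult_mono[of "r ^ j" "Q p" \<alpha> "c p"] Qpos[of p] a by simp
    then show ?thesis using Suc by (simp add: mult.commute)
  qed
  show ?thesis
  proof (intro exI[of _ mm] conjI allI impI)
    show "mm 0 = 0" by (rule mm0)
    fix j assume j: "j < k"
    have "Q (mm (Suc j)) \<le> r ^ Suc j" using Qmm[of "Suc j"] j by simp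
    also have "\<dots> \<le> r ^ j" using r by (simp add: power_decreasing)
    finally show le: "mm j \<le> mm (Suc j)" unfolding mm_def[of j] by (rule Least_le)
    have split: "Q (mm (Suc j)) = Q (mm j) * (\<Prod>i\<in>{mm j..<mm (Suc j)}. c i)"
      unfolding Q_def using le by (simp add: atLeast0LessThan[symmetric] prod.atLeastLessThan_concat)
    have "(\<Prod>i\<in>{mm j..<mm (Suc j)}. c i) = Q (mm (Suc j)) / Q (mm j)"
      using split Qpos[of "mm j"] by (simp add: field_simps)
    also have "\<dots> \<le> r ^ Suc j / (\<alpha> * r ^ j)"
      using Qmm[of "Suc j"] j lower[of j] Qpos a r
      by (intro frac_le) (auto simp: less_imp_le)
    also have "\<dots> = r / \<alpha>" using r a by (simp add: field_simps)
    finally show "(\<Prod>i\<in>{mm j..<mm (Suc j)}. c i) \<le> r / \<alpha>" .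
  qed
qed



lemma (in prob_space) nonconst_split:
  fixes X :: "'a \<Rightarrow> real"
  assumes X[measurable]: "X \<in> borel_measurable M" and nc: "\<not> (\<exists>c. AE \<omega> in M. X \<omega> = c)"
  shows "\<exists>x d. d > 0 \<and> 0 < prob {\<omega>\<in>space M. X \<omega> \<le> x} \<and> 0 < prob {\<omega>\<in>space M. x + d \<le> X \<omega>}"
proof -
  define G where "G x = prob {\<omega>\<in>space M. X \<omega> \<le> x}" for x
  have Gmono: "G x \<le> G y" if "x \<le> y" for x y
    unfolding G_def using that by (intro finite_measure_mono) (auto intro: order_trans)
  have AEF: "\<not> (AE \<omega> in M. False)" by simp
  have "\<exists>x. G x \<noteq> 0 \<and> G x \<noteq> 1"
  proof (rule ccontr)
    assume "\<not> ?thesis"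
    then have H: "G x = 0 \<or> G x = 1" for x by auto
    have ex1: "\<exists>x. G x = 1"
    proof (rule ccontr)
      assume "\<not> ?thesis"
      then have "G (real n) = 0" for n using H by auto
      then have "AE \<omega> in M. \<not> X \<omega> \<le> real n" for n
        unfolding G_def by (subst prob_Collect_eq_0[symmetric]) auto
      then have "AE \<omega> in M. \<forall>n. \<not> X \<omega> \<le> real n" by (simp add: AE_all_countable)
      then have "AE \<omega> in M. False"
        by eventually_elim (meson real_arch_simple)
      then show False using AEF by simp
    qed
    then obtain x1 where x1: "G x1 = 1" by auto
    have ex0: "\<exists>x. G x = 0"
    proof (rule ccontr)
      assume "\<not> ?thesis"
      then have "G (- real n) = 1" for n using H by auto
      then have "AE \<omega> in M. X \<omega> \<le> - real n" for n
        unfolding G_def by (subst prob_Collect_eq_1[symmetric]) auto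
      then have "AE \<omega> in M. \<forall>n. X \<omega> \<le> - real n" by (simp add: AE_all_countable)
      then have "AE \<omega> in M. False"
        proof eventually_elim
        case (elim \<omega>)
        obtain n where "- X \<omega> + 1 \<le> real n" using real_arch_simple by blast
        then show False using elim[rule_format, of n] by linarith
      qed
      then show False using AEF by simp
    qed
    then obtain y0 where y0: "G y0 = 0" by auto
    define S where "S = {x. G x = 1}"
    have Sne: "S \<noteq> {}" using x1 S_def by auto
    have Slb: "y0 \<le> x" if "x \<in> S" for x
    proof (rule ccontr)
      assume "\<not> y0 \<le> x" then have "G x \<le> G y0" by (intro Gmono) simp
      then show False using that y0 S_def by simp
    qed
    have bdd: "bdd_below S" using Slb by (auto simp: bdd_below_def)
    define c where "c = Inf S"
    have up: "AE \<omega> in M. X \<omega> \<le> c + inverse (real (Suc m))" for m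
    proof -
      have "c < c + inverse (real (Suc m))" by simp
      then obtain x where x: "x \<in> S" "x < c + inverse (real (Suc m))"
        using cInf_less_iff[OF Sne bdd, of "c + inverse (real (Suc m))"] c_def by force
      then have "1 \<le> G (c + inverse (real (Suc m)))" using Gmono[of x] S_def by force
      moreover have "G (c + inverse (real (Suc m))) \<le> 1" unfolding G_def by simp
      ultimately have "G (c + inverse (real (Suc m))) = 1" by simp
      then show ?thesis unfolding G_def by (subst prob_Collect_eq_1[symmetric]) auto
    qed
    have lo: "AE \<omega> in M. \<not> X \<omega> \<le> c - inverse (real (Suc m))" for m
    proof -
      have "c - inverse (real (Suc m)) \<notin> S"
      proof
        assume "c - inverse (real (Suc m)) \<in> S"
        then have "c \<le> c - inverse (real (Suc m))" unfolding c_def by (rule cInf_lower[OF _ bdd])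
        then show False by simp
      qed
      then have "G (c - inverse (real (Suc m))) = 0" using H S_def by auto
      then show ?thesis unfolding G_def by (subst prob_Collect_eq_0[symmetric]) auto
    qed
    have "AE \<omega> in M. X \<omega> = c"
    proof -
      have "AE \<omega> in M. \<forall>m. X \<omega> \<le> c + inverse (real (Suc m))" using up by (simp add: AE_all_countable)
      moreover have "AE \<omega> in M. \<forall>m. \<not> X \<omega> \<le> c - inverse (real (Suc m))" using lo by (simp add: AE_all_countable)
      ultimately show ?thesis
      proof eventually_elim
        case (elim \<omega>)
        show ?case
        proof (rule ccontr)
          assume "X \<omega> \<noteq> c"
          then have "0 < \<bar>X \<omega> - c\<bar>" by simp
          then obtain m where m: "inverse (real (Suc m)) < \<bar>X \<omega> - c\<bar>" using reals_Archimedean by blast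
          have "X \<omega> \<le> c + inverse (real (Suc m))" "\<not> X \<omega> \<le> c - inverse (real (Suc m))"
            using elim by auto
          then show False using m by (cases "X \<omega> \<le> c") (auto simp del: of_nat_Suc)
        qed
      qed
    qed
    then show False using nc by auto
  qed
  then obtain x where x: "G x \<noteq> 0" "G x \<noteq> 1" by auto
  have "\<exists>m. 0 < prob {\<omega>\<in>space M. x + inverse (real (Suc m)) \<le> X \<omega>}"
  proof (rule ccontr)
    assume "\<not> ?thesis"
    then have "prob {\<omega>\<in>space M. x + inverse (real (Suc m)) \<le> X \<omega>} = 0" for m
      using measure_nonneg[of M] by (meson not_less order_antisym)
    then have "AE \<omega> in M. \<not> x + inverse (real (Suc m)) \<le> X \<omega>" for m
      by (subst prob_Collect_eq_0[symmetric]) auto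
    then have "AE \<omega> in M. \<forall>m. \<not> x + inverse (real (Suc m)) \<le> X \<omega>" by (simp add: AE_all_countable)
    then have "AE \<omega> in M. X \<omega> \<le> x"
    proof eventually_elim
      case (elim \<omega>)
      show ?case
      proof (rule ccontr)
        assume "\<not> X \<omega> \<le> x"
        then have "0 < X \<omega> - x" by simp
        then obtain m where m: "inverse (real (Suc m)) < X \<omega> - x" using reals_Archimedean by blast
        show False using elim m by (metis add.commute less_diff_eq less_imp_le)
      qed
    qed
    then have "G x = 1" unfolding G_def by (subst prob_Collect_eq_1) auto
    then show False using x by simp
  qed
  then obtain m where m: "0 < prob {\<omega>\<in>space M. x + inverse (real (Suc m)) \<le> X \<omega>}" by auto
  have "0 \<le> G x" unfolding G_def by simp
  then have "0 < G x" using x(1) by (metis order_le_less)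
  then have "inverse (real (Suc m)) > 0 \<and> 0 < prob {\<omega>\<in>space M. X \<omega> \<le> x} \<and> 0 < prob {\<omega>\<in>space M. x + inverse (real (Suc m)) \<le> X \<omega>}"
    using m unfolding G_def by (simp del: of_nat_Suc)
  then show ?thesis by blast
qed



lemma ereal_le_abs_self: "(x::ereal) \<le> \<bar>x\<bar>" by (cases x) auto
lemma ereal_abs_lt_imp: "\<bar>y\<bar> < ereal e \<Longrightarrow> y < ereal e" by (cases y) auto
lemma ereal_abs_lt_I: "ereal (- e) < y \<Longrightarrow> y < ereal e \<Longrightarrow> \<bar>y\<bar> < ereal e" by (cases y) auto
lemma ereal_le_neg_abs: "y \<le> ereal (- e) \<Longrightarrow> 0 \<le> e \<Longrightarrow> ereal e \<le> \<bar>y\<bar>" by (cases y) auto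

theorem lemma51:
  fixes M :: "'s measure" and Z :: "nat \<Rightarrow> 's \<Rightarrow> real" and a :: "nat \<Rightarrow> nat \<Rightarrow> real"
  assumes "prob_space M"
    and "prob_space.indep_vars M (\<lambda>_. borel) Z UNIV"
    and "\<And>i. distr M borel (Z i) = distr M borel (Z 0)"
    and "\<not> (\<exists>c. AE \<omega> in M. Z 0 \<omega> = c)"
    and "\<And>\<epsilon>. \<epsilon> > 0 \<Longrightarrow>
          (\<lambda>n. measure M {\<omega> \<in> space M. ereal \<epsilon> \<le> \<bar>kth_largest (a n) (\<lambda>i. Z i \<omega>) 1\<bar>}) \<longlonglongrightarrow> 0"
    and "k \<ge> 1"
    and "\<epsilon> > 0"
  shows "(\<lambda>n. measure M {\<omega> \<in> space M. ereal \<epsilon> \<le> \<bar>kth_largest (a n) (\<lambda>i. Z i \<omega>) k\<bar>}) \<longlonglongrightarrow> 0"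
proof -
  interpret P: prob_space M by (rule assms(1))
  have rv[measurable]: "Z i \<in> borel_measurable M" for i
    using assms(2) unfolding P.indep_vars_def by auto
  have ident: "P.prob (Z i -` B \<inter> space M) = P.prob (Z 0 -` B \<inter> space M)" if "B \<in> sets borel" for i B
  proof -
    have "measure (distr M borel (Z i)) B = measure (distr M borel (Z 0)) B" using assms(3)[of i] by simp
    then show ?thesis using that by (simp add: measure_distr)
  qed
  have identlt: "P.prob {\<omega>\<in>space M. Z i \<omega> < y} = P.prob {\<omega>\<in>space M. Z 0 \<omega> < y}" for i y
  proof -
    have "Z j -` {..<y} \<inter> space M = {\<omega>\<in>space M. Z j \<omega> < y}" for j by auto
    then show ?thesis using ident[of "{..<y}" i] by simp
  qed
  have identge: "P.prob {\<omega>\<in>space M. y \<le> Z i \<omega>} = P.prob {\<omega>\<in>space M. y \<le> Z 0 \<omega>}" for i y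
  proof -
    have "Z j -` {y..} \<inter> space M = {\<omega>\<in>space M. y \<le> Z j \<omega>}" for j by auto
    then show ?thesis using ident[of "{y..}" i] by simp
  qed
  obtain x d where d: "d > 0" and al: "0 < P.prob {\<omega>\<in>space M. Z 0 \<omega> \<le> x}"
    and be: "0 < P.prob {\<omega>\<in>space M. x + d \<le> Z 0 \<omega>}"
    using P.nonconst_split[OF rv assms(4)] by auto
  define \<alpha> where "\<alpha> = P.prob {\<omega>\<in>space M. Z 0 \<omega> \<le> x}"
  define \<beta> where "\<beta> = P.prob {\<omega>\<in>space M. x + d \<le> Z 0 \<omega>}"
  have \<alpha>: "0 < \<alpha>" "\<alpha> \<le> 1" using al by (auto simp: \<alpha>_def)
  have \<beta>: "0 < \<beta>" using be by (auto simp: \<beta>_def)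
  define \<delta> where "\<delta> = min (\<epsilon>/2) (d/2)"
  have \<delta>: "0 < \<delta>" "\<delta> < \<epsilon>" "2 * \<delta> \<le> d" using d assms(7) by (auto simp: \<delta>_def)
  define M1 where "M1 n \<omega> = kth_largest (a n) (\<lambda>i. Z i \<omega>) 1" for n \<omega>
  define Mk where "Mk n \<omega> = kth_largest (a n) (\<lambda>i. Z i \<omega>) k" for n \<omega>
  define S where "S e n = {\<omega>\<in>space M. ereal e \<le> \<bar>M1 n \<omega>\<bar>}" for e n
  have M1_eq: "M1 n = (\<lambda>\<omega>. SUP i. ereal (a n i + Z i \<omega>))" for n
    unfolding M1_def using kth1 by (auto simp: One_nat_def)
  have M1meas[measurable]: "M1 n \<in> borel_measurable M" for n
    unfolding M1_eq by measurable
  have Smeas: "S e n \<in> sets M" for e n unfolding S_def by measurable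
  have hyp: "(\<lambda>n. P.prob (S e n)) \<longlonglongrightarrow> 0" if "e > 0" for e
    using assms(5)[OF that] unfolding S_def M1_def by simp
  have M1ge: "ereal (a n i + Z i \<omega>) \<le> M1 n \<omega>" for n i \<omega>
    unfolding M1_eq by (rule SUP_upper) simp
  have inS: "\<omega> \<in> S e n" if "e \<le> a n i + Z i \<omega>" "\<omega> \<in> space M" for e n i \<omega>
  proof -
    have "ereal e \<le> ereal (a n i + Z i \<omega>)" using that by simp
    also have "\<dots> \<le> M1 n \<omega>" by (rule M1ge)
    also have "\<dots> \<le> \<bar>M1 n \<omega>\<bar>" by (rule ereal_le_abs_self)
    finally show ?thesis using that unfolding S_def by simp
  qed
  have allfail: "\<omega> \<in> S \<delta> n" if "\<forall>i. a n i + Z i \<omega> < - \<delta>" "\<omega> \<in> space M" for n \<omega>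
  proof -
    have "M1 n \<omega> \<le> ereal (- \<delta>)" unfolding M1_eq
      using that by (intro SUP_least) (auto intro: less_imp_le)
    then have "ereal \<delta> \<le> \<bar>M1 n \<omega>\<bar>" using \<delta> by (intro ereal_le_neg_abs) auto
    then show ?thesis using that unfolding S_def by simp
  qed
  define c where "c n i = P.prob {\<omega>\<in>space M. a n i + Z i \<omega> < - \<delta>}" for n i
  have Bmeas: "{\<omega>\<in>space M. \<forall>i\<in>J. a n i + Z i \<omega> < - \<delta>} \<in> sets M" if "finite J" for J n
    using that by measurable
  have prodJ: "P.prob {\<omega>\<in>space M. \<forall>i\<in>J. a n i + Z i \<omega> < - \<delta>} = (\<Prod>i\<in>J. c n i)" if "finite J" for J n
  proof (cases "J = {}")
    case True then show ?thesis by (simp add: P.prob_space)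
  next
    case False
    have eq: "{\<omega>\<in>space M. \<forall>i\<in>J. a n i + Z i \<omega> < - \<delta>} = (\<Inter>i\<in>J. Z i -` {..< - \<delta> - a n i} \<inter> space M)"
      using False by auto
    have ceq: "c n i = P.prob (Z i -` {..< - \<delta> - a n i} \<inter> space M)" for i
      unfolding c_def by (rule arg_cong[where f = P.prob]) auto
    show ?thesis unfolding eq ceq
      by (rule P.indep_varsD[OF assms(2)]) (use False that in auto)
  qed
  show ?thesis
  proof (rule LIMSEQ_I)
    fix \<eta> :: real assume \<eta>: "0 < \<eta>"
    have kpos: "0 < real k" using assms(6) by simp
    define r where "r = min (1/2) (\<eta> * \<alpha> / (2 * real k))"
    have r: "0 < r" "r \<le> 1" using \<eta> \<alpha> kpos by (auto simp: r_def)
    have rk: "real k * (r / \<alpha>) \<le> \<eta> / 2"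
    proof -
      have "r \<le> \<eta> * \<alpha> / (2 * real k)" by (simp add: r_def)
      then have "real k * r \<le> \<eta> * \<alpha> / 2" using kpos by (simp add: field_simps)
      then show ?thesis using \<alpha> by (simp add: field_simps)
    qed
    have "0 < min \<beta> (r ^ k)" using \<beta> r by simp
    then have ev1: "eventually (\<lambda>n. P.prob (S \<delta> n) < min \<beta> (r ^ k)) sequentially"
      using order_tendstoD(2)[OF hyp[OF \<delta>(1)]] by blast
    have ev2: "eventually (\<lambda>n. P.prob (S \<epsilon> n) < \<eta> / 2) sequentially"
      using order_tendstoD(2)[OF hyp[OF assms(7)], of "\<eta> / 2"] \<eta> by (metis half_gt_zero)
    obtain N where N: "\<And>n. n \<ge> N \<Longrightarrow> P.prob (S \<delta> n) < min \<beta> (r ^ k) \<and> P.prob (S \<epsilon> n) < \<eta> / 2"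
      using eventually_conj[OF ev1 ev2] unfolding eventually_sequentially by blast
    show "\<exists>no. \<forall>n\<ge>no. norm (P.prob {\<omega> \<in> space M. ereal \<epsilon> \<le> \<bar>kth_largest (a n) (\<lambda>i. Z i \<omega>) k\<bar>} - 0) < \<eta>"
    proof (intro exI[of _ N] allI impI)
      fix n assume n: "N \<le> n"
      have h1: "P.prob (S \<delta> n) < \<beta>" "P.prob (S \<delta> n) < r ^ k" and h2: "P.prob (S \<epsilon> n) < \<eta> / 2"
        using N[OF n] by auto
      have cbound: "\<alpha> \<le> c n i \<and> c n i \<le> 1" for i
      proof
        show "c n i \<le> 1" by (simp add: c_def)
        show "\<alpha> \<le> c n i"
        proof (cases "x < - \<delta> - a n i")
          case True
          have "\<alpha> \<le> P.prob {\<omega>\<in>space M. Z 0 \<omega> < - \<delta> - a n i}"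
            unfolding \<alpha>_def using True by (intro P.finite_measure_mono) auto
          also have "\<dots> = P.prob {\<omega>\<in>space M. Z i \<omega> < - \<delta> - a n i}" by (rule identlt[symmetric])
          also have "\<dots> = c n i" unfolding c_def by (rule arg_cong[where f = P.prob]) auto
          finally show ?thesis .
        next
          case False
          have "\<beta> = P.prob {\<omega>\<in>space M. x + d \<le> Z i \<omega>}" unfolding \<beta>_def by (rule identge[symmetric])
          also have "\<dots> \<le> P.prob (S \<delta> n)"
          proof (intro P.finite_measure_mono Smeas subsetI)
            fix \<omega> assume "\<omega> \<in> {\<omega>\<in>space M. x + d \<le> Z i \<omega>}"
            then have "\<omega> \<in> space M" "\<delta> \<le> a n i + Z i \<omega>" using False \<delta> by auto
            then show "\<omega> \<in> S \<delta> n" by (intro inS)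
          qed
          finally show ?thesis using h1 by simp
        qed
      qed
      have exm: "\<exists>m. (\<Prod>i<m. c n i) < r ^ k"
      proof -
        define A where "A m = {\<omega>\<in>space M. \<forall>i\<in>{..<m}. a n i + Z i \<omega> < - \<delta>}" for m
        have Ameas: "range A \<subseteq> sets M" unfolding A_def using Bmeas by auto
        have Adec: "decseq A" unfolding decseq_def A_def by auto
        have lim: "(\<lambda>m. P.prob (A m)) \<longlonglongrightarrow> P.prob (\<Inter>m. A m)"
          by (rule P.finite_Lim_measure_decseq[OF Ameas Adec])
        have "(\<Inter>m. A m) \<subseteq> S \<delta> n"
        proof
          fix \<omega> assume "\<omega> \<in> (\<Inter>m. A m)"
          then have "\<omega> \<in> space M" "\<forall>i. a n i + Z i \<omega> < - \<delta>" unfolding A_def by auto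
          then show "\<omega> \<in> S \<delta> n" by (intro allfail)
        qed
        then have "P.prob (\<Inter>m. A m) < r ^ k" using h1(2) P.finite_measure_mono[OF _ Smeas] by (meson le_less_trans)
        then have "eventually (\<lambda>m. P.prob (A m) < r ^ k) sequentially" using order_tendstoD(2)[OF lim] by blast
        then obtain m where "P.prob (A m) < r ^ k" unfolding eventually_sequentially by blast
        then show ?thesis using prodJ[of "{..<m}" n] unfolding A_def by auto
      qed
      obtain mm where mm0: "mm 0 = 0"
        and mm: "\<And>j. j < k \<Longrightarrow> mm j \<le> mm (Suc j) \<and> (\<Prod>i\<in>{mm j..<mm (Suc j)}. c n i) \<le> r / \<alpha>"
        using blocks[of \<alpha> "c n" r k] cbound \<alpha> r exm by blast
      have mmmono: "mm j \<le> mm (j + l)" if "j + l \<le> k" for j l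
        using that
      proof (induction l)
        case 0 then show ?case by simp
      next
        case (Suc l)
        then have "mm j \<le> mm (j + l)" by simp
        also have "\<dots> \<le> mm (Suc (j + l))" using mm[of "j + l"] Suc.prems by simp
        finally show ?case by simp
      qed
      define B where "B j = {\<omega>\<in>space M. \<forall>i\<in>{mm j..<mm (Suc j)}. a n i + Z i \<omega> < - \<delta>}" for j
      have Bm: "B j \<in> sets M" for j unfolding B_def by (rule Bmeas) simp
      have PB: "P.prob (B j) \<le> r / \<alpha>" if "j < k" for j
        unfolding B_def using prodJ[of "{mm j..<mm (Suc j)}" n] mm[OF that] by simp
      have incl: "{\<omega> \<in> space M. ereal \<epsilon> \<le> \<bar>kth_largest (a n) (\<lambda>i. Z i \<omega>) k\<bar>} \<subseteq> S \<epsilon> n \<union> (\<Union>j<k. B j)"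
      proof
        fix \<omega> assume \<omega>: "\<omega> \<in> {\<omega> \<in> space M. ereal \<epsilon> \<le> \<bar>kth_largest (a n) (\<lambda>i. Z i \<omega>) k\<bar>}"
        show "\<omega> \<in> S \<epsilon> n \<union> (\<Union>j<k. B j)"
        proof (rule ccontr)
          assume nin: "\<omega> \<notin> S \<epsilon> n \<union> (\<Union>j<k. B j)"
          then have nS: "\<omega> \<notin> S \<epsilon> n" and nB: "\<forall>j<k. \<omega> \<notin> B j" by auto
          have "\<forall>j<k. \<exists>i\<in>{mm j..<mm (Suc j)}. - \<delta> \<le> a n i + Z i \<omega>"
            using nB \<omega> by (auto simp: B_def not_less)
          then obtain f where f: "\<And>j. j < k \<Longrightarrow> f j \<in> {mm j..<mm (Suc j)} \<and> - \<delta> \<le> a n (f j) + Z (f j) \<omega>"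
            by metis
          have fmono: "f j < f j'" if "j < j'" "j' < k" for j j'
          proof -
            have "f j < mm (Suc j)" using f[of j] that by auto
            also have "mm (Suc j) \<le> mm (Suc j + (j' - Suc j))" using that by (intro mmmono) simp
            also have "\<dots> = mm j'" using that by simp
            also have "\<dots> \<le> f j'" using f[of j'] that by auto
            finally show ?thesis .
          qed
          have inj: "inj_on f {..<k}"
          proof (rule inj_onI)
            fix j j' assume "j \<in> {..<k}" "j' \<in> {..<k}" "f j = f j'"
            then show "j = j'" using fmono[of j j'] fmono[of j' j] by (cases j j' rule: linorder_cases) auto
          qed
          have "ereal (- \<delta>) \<le> Mk n \<omega>" unfolding Mk_def
            using f inj by (intro kth_ge[of "f ` {..<k}"]) (auto simp: card_image)
          moreover have "ereal (- \<epsilon>) < ereal (- \<delta>)" using \<delta> by simp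
          ultimately have lo: "ereal (- \<epsilon>) < Mk n \<omega>" by (rule order.strict_trans2[rotated])
          have "Mk n \<omega> \<le> M1 n \<omega>" unfolding Mk_def M1_def by (rule kth_mono[OF assms(6)])
          also have "M1 n \<omega> < ereal \<epsilon>" using nS \<omega> unfolding S_def by (auto intro: ereal_abs_lt_imp)
          finally have "\<bar>Mk n \<omega>\<bar> < ereal \<epsilon>" using lo by (intro ereal_abs_lt_I)
          then show False using \<omega> unfolding Mk_def by (simp add: not_le[symmetric])
        qed
      qed
      have "P.prob {\<omega> \<in> space M. ereal \<epsilon> \<le> \<bar>kth_largest (a n) (\<lambda>i. Z i \<omega>) k\<bar>} \<le> P.prob (S \<epsilon> n \<union> (\<Union>j<k. B j))"
        using incl Smeas Bm by (intro P.finite_measure_mono) auto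
      also have "\<dots> \<le> P.prob (S \<epsilon> n) + P.prob (\<Union>j<k. B j)"
        using Smeas Bm by (intro measure_Un_le) auto
      also have "P.prob (\<Union>j<k. B j) \<le> (\<Sum>j<k. P.prob (B j))"
        using Bm by (intro measure_UNION_le) auto
      also have "\<dots> \<le> (\<Sum>j<k. r / \<alpha>)" using PB by (intro sum_mono) auto
      also have "\<dots> = real k * (r / \<alpha>)" by simp
      finally have "P.prob {\<omega> \<in> space M. ereal \<epsilon> \<le> \<bar>kth_largest (a n) (\<lambda>i. Z i \<omega>) k\<bar>} < \<eta>"
        using rk h2 by linarith
      then show "norm (P.prob {\<omega> \<in> space M. ereal \<epsilon> \<le> \<bar>kth_largest (a n) (\<lambda>i. Z i \<omega>) k\<bar>} - 0) < \<eta>"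
        by simp
    qed
  qed
qed

end
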